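(* If $X$ is a compact metric space and $T:X\to X$ is continuous, then for the system of coefficients $c_S^n=2^{-n}$, $$\lim_{\varepsilon\to0^+}\operatorname{Asc}_\varepsilon(X,T)=\lim_{\varepsilon\to0^+}\operatorname{Asc}'_\varepsilon(X,T)=h_{\mathrm{top}}(X,T).$$
   Context: $n^*=\{0,\dots,n-1\}$; for $S\subset n^*$, $r(S,\varepsilon)$ is the minimum cardinality of an $(S,\varepsilon)$-spanning set ($F$ such that every $x$ has $y\in F$ with $d(T^ix,T^iy)\le\varepsilon$ for all $i\in S$) and $s(S,\varepsilon)$ the maximum cardinality of an $(S,\varepsilon)$-separated set ($E$ such that distinct $x,y\in E$ have some $i\in S$ with $d(T^ix,T^iy)>\varepsilon$). $\operatorname{Asc}_\varepsilon(X,T)=\limsup_n\frac1n\sum_{S\subset n^*}c_S^n\log r(S,\varepsilon)$ and $\operatorname{Asc}'_\varepsilon(X,T)=\limsup_n\frac1n\sum_{S\subset n^*}c_S^n\log s(S,\varepsilon)$. $h_{\mathrm{top}}$ is topological entropy. *)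

theory Defs
  imports "HOL-Analysis.Analysis" "HOL-Library.Liminf_Limsup"
begin

definition spanning :: "('a::metric_space \<Rightarrow> 'a) \<Rightarrow> nat set \<Rightarrow> real \<Rightarrow> 'a set \<Rightarrow> bool" where
  "spanning T S \<epsilon> F \<longleftrightarrow> (\<forall>x. \<exists>y\<in>F. \<forall>i\<in>S. dist ((T ^^ i) x) ((T ^^ i) y) \<le> \<epsilon>)"

definition separated :: "('a::metric_space \<Rightarrow> 'a) \<Rightarrow> nat set \<Rightarrow> real \<Rightarrow> 'a set \<Rightarrow> bool" where
  "separated T S \<epsilon> E \<longleftrightarrow>
     (\<forall>x\<in>E. \<forall>y\<in>E. x \<noteq> y \<longrightarrow> (\<exists>i\<in>S. dist ((T ^^ i) x) ((T ^^ i) y) > \<epsilon>))"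

definition rspan :: "('a::metric_space \<Rightarrow> 'a) \<Rightarrow> nat set \<Rightarrow> real \<Rightarrow> nat" where
  "rspan T S \<epsilon> = Inf {card F | F. finite F \<and> spanning T S \<epsilon> F}"

definition ssep :: "('a::metric_space \<Rightarrow> 'a) \<Rightarrow> nat set \<Rightarrow> real \<Rightarrow> nat" where
  "ssep T S \<epsilon> = Sup {card E | E. finite E \<and> separated T S \<epsilon> E}"

text \<open>Asc_eps and Asc'_eps for a system of coefficients c n S (= c_S^n), S ranging over subsets
  of n* = {0..<n}.\<close>
definition Asc :: "(nat \<Rightarrow> nat set \<Rightarrow> real) \<Rightarrow> ('a::metric_space \<Rightarrow> 'a) \<Rightarrow> real \<Rightarrow> ereal" where
  "Asc c T \<epsilon> = limsup (\<lambda>n. ereal ((1 / real n) *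
      (\<Sum>S\<in>Pow {..<n}. c n S * ln (real (rspan T S \<epsilon>)))))"

definition Asc' :: "(nat \<Rightarrow> nat set \<Rightarrow> real) \<Rightarrow> ('a::metric_space \<Rightarrow> 'a) \<Rightarrow> real \<Rightarrow> ereal" where
  "Asc' c T \<epsilon> = limsup (\<lambda>n. ereal ((1 / real n) *
      (\<Sum>S\<in>Pow {..<n}. c n S * ln (real (ssep T S \<epsilon>)))))"

text \<open>Topological entropy (Bowen's definition via spanning sets):
  h_top = lim_{eps->0} limsup_n (1/n) log r(n*, eps); the inner quantity is
  nonincreasing in eps, so the limit equals the supremum over eps > 0.\<close>
definition htop :: "('a::metric_space \<Rightarrow> 'a) \<Rightarrow> ereal" where
  "htop T = (SUP \<epsilon>\<in>{0<..}. limsup (\<lambda>n. ereal (ln (real (rspan T {..<n} \<epsilon>)) / real n)))"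

end

theory Submission
  imports Defs
begin


lemma spanning_nonempty: "spanning T S e F \<Longrightarrow> F \<noteq> {}"
  unfolding spanning_def by blast

lemma spanning_mono_S: "spanning T S' e F \<Longrightarrow> S \<subseteq> S' \<Longrightarrow> spanning T S e F"
  unfolding spanning_def by blast

lemma spanning_mono_e: assumes a: "spanning T S e F" and b: "e \<le> e'" shows "spanning T S e' F"
  unfolding spanning_def
proof
  fix x
  obtain y where y: "y \<in> F" "\<forall>i\<in>S. dist ((T ^^ i) x) ((T ^^ i) y) \<le> e"
    using a unfolding spanning_def by blast
  have "\<forall>i\<in>S. dist ((T ^^ i) x) ((T ^^ i) y) \<le> e'"
  proof
    fix i assume "i \<in> S"
    hence "dist ((T ^^ i) x) ((T ^^ i) y) \<le> e" using y(2) by blast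
    thus "dist ((T ^^ i) x) ((T ^^ i) y) \<le> e'" using b by linarith
  qed
  thus "\<exists>y\<in>F. \<forall>i\<in>S. dist ((T ^^ i) x) ((T ^^ i) y) \<le> e'" using y(1) by blast
qed

lemma rspan_le: assumes "finite F" "spanning T S e F" shows "rspan T S e \<le> card F"
  unfolding rspan_def
proof (rule cInf_lower)
  show "card F \<in> {card F |F. finite F \<and> spanning T S e F}" using assms by blast
  show "bdd_below {card F |F. finite F \<and> spanning T S e F}" by (rule bdd_belowI[of _ 0]) simp
qed

lemma rspan_attained: assumes "finite F" "spanning T S e F"
  shows "\<exists>F. finite F \<and> spanning T S e F \<and> card F = rspan T S e"
proof -
  have mem: "card F \<in> {card F |F. finite F \<and> spanning T S e F}" using assms by blast
  have ne: "{card F |F. finite F \<and> spanning T S e F} \<noteq> {}"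
    by (rule ex_in_conv[THEN iffD1], rule exI, rule mem)
  have "rspan T S e \<in> {card F | F. finite F \<and> spanning T S e F}"
    unfolding rspan_def by (rule Inf_nat_def1[OF ne])
  hence "\<exists>G. rspan T S e = card G \<and> finite G \<and> spanning T S e G" by (simp only: mem_Collect_eq)
  then obtain G where "rspan T S e = card G" "finite G" "spanning T S e G" by blast
  thus ?thesis by (intro exI[of _ G]) simp
qed

lemma rspan_ge1: assumes "finite F" "spanning T S e F" shows "1 \<le> rspan T S e"
proof -
  obtain G where G: "finite G" "spanning T S e G" "card G = rspan T S e"
    using rspan_attained[OF assms] by blast
  have "G \<noteq> {}" using spanning_nonempty[OF G(2)] .
  hence "0 < card G" using G(1) by (simp add: card_gt_0_iff)
  thus ?thesis using G(3) by simp
qed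

lemma sep_zero_in: "(0::nat) \<in> {card E |E. finite E \<and> separated T S e E}"
  unfolding mem_Collect_eq by (rule exI[of _ "{}"]) (simp add: separated_def)

lemma cells:
  fixes T :: "'a::metric_space \<Rightarrow> 'a" and K :: "'a set"
  assumes "finite K" "\<forall>x. \<exists>k\<in>K. dist x k < d/2"
    "finite F" "\<forall>x. \<exists>y\<in>F. \<forall>j\<in>A. dist ((T^^j) x) ((T^^j) y) \<le> d" "finite B"
  shows "\<exists>G. finite G \<and> card G \<le> card F * card K ^ card B \<and>
     (\<forall>x. \<exists>z\<in>G. \<forall>j\<in>A \<union> B. dist ((T^^j) x) ((T^^j) z) \<le> 2*d)"
proof -
  define P where "P y \<sigma> z \<longleftrightarrow> (\<forall>j\<in>A. dist ((T^^j) z) ((T^^j) y) \<le> d) \<and> (\<forall>i\<in>B. dist ((T^^i) z) (\<sigma> i) < d/2)"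
    for y \<sigma> z
  define g where "g = (\<lambda>(y,\<sigma>). SOME z. P y \<sigma> z)"
  define G where "G = g ` (F \<times> PiE B (\<lambda>_. K))"
  have fin: "finite (F \<times> PiE B (\<lambda>_. K))" using assms by (simp add: finite_PiE)
  have "card G \<le> card (F \<times> PiE B (\<lambda>_. K))" unfolding G_def using fin by (rule card_image_le)
  also have "\<dots> = card F * card K ^ card B" using assms by (simp add: card_cartesian_product card_PiE)
  finally have cG: "card G \<le> card F * card K ^ card B" .
  have "\<exists>z\<in>G. \<forall>j\<in>A \<union> B. dist ((T^^j) x) ((T^^j) z) \<le> 2*d" for x
  proof -
    obtain y where y: "y \<in> F" "\<forall>j\<in>A. dist ((T^^j) x) ((T^^j) y) \<le> d" using assms(4) by blast
    define \<sigma> where "\<sigma> = restrict (\<lambda>i. SOME k. k\<in>K \<and> dist ((T^^i) x) k < d/2) B"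
    have sk: "(SOME k. k\<in>K \<and> dist ((T^^i) x) k < d/2) \<in> K \<and> dist ((T^^i) x) (SOME k. k\<in>K \<and> dist ((T^^i) x) k < d/2) < d/2" for i
      by (rule someI_ex) (use assms(2) in blast)
    have s: "\<sigma> \<in> PiE B (\<lambda>_. K)" unfolding \<sigma>_def
      by (rule restrict_PiE_iff[THEN iffD2]) (use sk in blast)
    have sB: "\<forall>i\<in>B. dist ((T^^i) x) (\<sigma> i) < d/2"
    proof
      fix i assume "i \<in> B"
      thus "dist ((T^^i) x) (\<sigma> i) < d/2" unfolding \<sigma>_def using sk[of i] by simp
    qed
    have "P y \<sigma> x" unfolding P_def using y(2) sB by blast
    moreover have "g (y,\<sigma>) = (SOME z. P y \<sigma> z)" unfolding g_def by simp
    ultimately have Pz: "P y \<sigma> (g (y,\<sigma>))" using someI[of "P y \<sigma>" x] by simp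
    have "(y,\<sigma>) \<in> F \<times> PiE B (\<lambda>_. K)" using y(1) s by blast
    hence zG: "g (y,\<sigma>) \<in> G" unfolding G_def by (rule imageI)
    have "\<forall>j\<in>A \<union> B. dist ((T^^j) x) ((T^^j) (g (y,\<sigma>))) \<le> 2*d"
    proof
      fix j assume "j \<in> A \<union> B"
      then consider "j \<in> A" | "j \<in> B" by blast
      then show "dist ((T^^j) x) ((T^^j) (g (y,\<sigma>))) \<le> 2*d"
      proof cases
        case 1
        have a: "dist ((T^^j) x) ((T^^j) y) \<le> d" using y(2) 1 by blast
        have b: "dist ((T^^j) (g (y,\<sigma>))) ((T^^j) y) \<le> d" using Pz 1 unfolding P_def by blast
        show ?thesis using a b dist_triangle2[of "(T^^j) x" "(T^^j) (g (y,\<sigma>))" "(T^^j) y"] by linarith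
      next
        case 2
        have "dist ((T^^j) x) (\<sigma> j) < d/2" using sB 2 by blast
        moreover have "dist ((T^^j) (g (y,\<sigma>))) (\<sigma> j) < d/2" using Pz 2 unfolding P_def by auto
        ultimately show ?thesis using dist_triangle2[of "(T^^j) x" "(T^^j) (g (y,\<sigma>))" "\<sigma> j"]
          zero_le_dist[of "(T^^j) x" "\<sigma> j"] by linarith
      qed
    qed
    with zG show ?thesis by blast
  qed
  moreover have "finite G" unfolding G_def using fin by simp
  ultimately show ?thesis using cG by blast
qed

context
  fixes T :: "'a::metric_space \<Rightarrow> 'a"
  assumes cpt: "compact (UNIV :: 'a set)" and cont: "continuous_on UNIV T"
begin

lemma cover:
  assumes "d > 0"
  obtains K :: "'a set" where "finite K" "K \<noteq> {}" "\<forall>x. \<exists>k\<in>K. dist x k < d"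
proof -
  obtain k where k: "finite k" "(UNIV::'a set) \<subseteq> (\<Union>x\<in>k. ball x d)"
    using cpt assms unfolding compact_eq_totally_bounded by blast
  have "\<forall>x. \<exists>y\<in>k. dist x y < d"
  proof
    fix x :: 'a
    have "x \<in> (\<Union>x\<in>k. ball x d)" using k(2) by blast
    then obtain y where "y \<in> k" "x \<in> ball y d" by blast
    hence "dist y x < d" by simp
    hence "dist x y < d" using dist_commute[of x y] by simp
    thus "\<exists>y\<in>k. dist x y < d" using \<open>y \<in> k\<close> by blast
  qed
  moreover have "k \<noteq> {}" using k(2) by blast
  ultimately show ?thesis using that k(1) by blast
qed

lemma unif_iter:
  assumes "d > 0"
  shows "\<exists>e>0. \<forall>u v::'a. dist u v \<le> e \<longrightarrow> (\<forall>k\<le>m. dist ((T^^k) u) ((T^^k) v) \<le> d)"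
proof (induction m)
  case 0
  then show ?case using assms by (intro exI[of _ d]) auto
next
  case (Suc m)
  then obtain e where e: "e > 0" "\<forall>u v::'a. dist u v \<le> e \<longrightarrow> (\<forall>k\<le>m. dist ((T^^k) u) ((T^^k) v) \<le> d)"
    by blast
  have "uniformly_continuous_on UNIV T" by (rule compact_uniformly_continuous[OF cont cpt])
  then have "\<forall>e>0. \<exists>d>0. \<forall>x\<in>UNIV. \<forall>x'\<in>UNIV. dist x' x < d \<longrightarrow> dist (T x') (T x) < e"
    unfolding uniformly_continuous_on_def .
  then obtain \<eta> where \<eta>0: "\<eta> > 0" and \<eta>1: "\<forall>x\<in>UNIV. \<forall>x'\<in>UNIV. dist x' x < \<eta> \<longrightarrow> dist (T x') (T x) < e"
    using e(1) by blast
  have \<eta>: "\<eta> > 0" "\<forall>x x'. dist x' x < \<eta> \<longrightarrow> dist (T x') (T x) < e" using \<eta>0 \<eta>1 by auto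
  show ?case
  proof (intro exI[of _ "min (\<eta>/2) d"] conjI allI impI)
    show "0 < min (\<eta>/2) d" using \<eta> assms by simp
    fix u v :: 'a and k :: nat assume uv: "dist u v \<le> min (\<eta>/2) d" and k: "k \<le> Suc m"
    show "dist ((T^^k) u) ((T^^k) v) \<le> d"
    proof (cases k)
      case 0
      have "min (\<eta>/2) d \<le> d" by (rule min.cobounded2)
      then show ?thesis using uv 0 by simp
    next
      case (Suc k')
      have "min (\<eta>/2) d \<le> \<eta>/2" by (rule min.cobounded1)
      hence "dist u v < \<eta>" using \<eta>(1) uv by linarith
      hence "dist (T u) (T v) < e" using \<eta>(2) by blast
      hence "dist (T u) (T v) \<le> e" by simp
      hence "\<forall>k\<le>m. dist ((T^^k) (T u)) ((T^^k) (T v)) \<le> d" using e(2) by blast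
      moreover have "k' \<le> m" using k Suc by simp
      ultimately have "dist ((T^^k') (T u)) ((T^^k') (T v)) \<le> d" by blast
      thus ?thesis using Suc by (simp add: funpow_Suc_right del: funpow.simps)
    qed
  qed
qed

lemma exists_spanning:
  assumes "finite S" "e > 0"
  shows "\<exists>F. finite F \<and> spanning T S e F"
proof -
  have "(e/2)/2 > 0" using assms by simp
  then obtain K :: "'a set" where K: "finite K" "K \<noteq> {}" "\<forall>x. \<exists>k\<in>K. dist x k < (e/2)/2"
    by (rule cover)
  have "\<forall>x. \<exists>y\<in>{undefined}. \<forall>j\<in>{}. dist ((T^^j) x) ((T^^j) y) \<le> e/2" by simp
  from cells[OF K(1) K(3) _ this assms(1)]
  obtain G where "finite G" "\<forall>x. \<exists>z\<in>G. \<forall>j\<in>{} \<union> S. dist ((T^^j) x) ((T^^j) z) \<le> 2*(e/2)"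
    by auto
  thus ?thesis unfolding spanning_def by auto
qed

lemma rspan_ge1': "finite S \<Longrightarrow> e > 0 \<Longrightarrow> 1 \<le> rspan T S e"
  using exists_spanning rspan_ge1 by blast

lemma rspan_attained': "finite S \<Longrightarrow> e > 0 \<Longrightarrow> \<exists>F. finite F \<and> spanning T S e F \<and> card F = rspan T S e"
  using exists_spanning rspan_attained by blast

lemma rspan_mono_S: "finite S' \<Longrightarrow> e > 0 \<Longrightarrow> S \<subseteq> S' \<Longrightarrow> rspan T S e \<le> rspan T S' e"
proof -
  assume a: "finite S'" "e > 0" "S \<subseteq> S'"
  obtain F where F: "finite F" "spanning T S' e F" "card F = rspan T S' e"
    using rspan_attained'[OF a(1,2)] by blast
  have "spanning T S e F" using spanning_mono_S[OF F(2) a(3)] .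
  from rspan_le[OF F(1) this] F(3) show ?thesis by simp
qed

lemma rspan_mono_e: "finite S \<Longrightarrow> e > 0 \<Longrightarrow> e \<le> e' \<Longrightarrow> rspan T S e' \<le> rspan T S e"
proof -
  assume a: "finite S" "e > 0" "e \<le> e'"
  obtain F where F: "finite F" "spanning T S e F" "card F = rspan T S e"
    using rspan_attained'[OF a(1,2)] by blast
  have "spanning T S e' F" using spanning_mono_e[OF F(2) a(3)] .
  from rspan_le[OF F(1) this] F(3) show ?thesis by simp
qed

lemma sep_card_le:
  assumes "finite S" "e > 0" "finite E" "separated T S e E"
  shows "card E \<le> rspan T S (e/2)"
proof -
  obtain F where F: "finite F" "spanning T S (e/2) F" "card F = rspan T S (e/2)"
    using rspan_attained'[OF assms(1), of "e/2"] assms by auto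
  define f where "f x = (SOME y. y \<in> F \<and> (\<forall>i\<in>S. dist ((T^^i) x) ((T^^i) y) \<le> e/2))" for x
  have f: "f x \<in> F \<and> (\<forall>i\<in>S. dist ((T^^i) x) ((T^^i) (f x)) \<le> e/2)" for x
    unfolding f_def by (rule someI_ex) (use F(2) in \<open>auto simp: spanning_def\<close>)
  have "inj_on f E"
  proof (rule inj_onI, rule ccontr)
    fix x y assume xy: "x \<in> E" "y \<in> E" "f x = f y" "x \<noteq> y"
    then obtain i where i: "i \<in> S" "dist ((T^^i) x) ((T^^i) y) > e"
      using assms(4) unfolding separated_def by blast
    have "dist ((T^^i) x) ((T^^i) (f x)) \<le> e/2" "dist ((T^^i) y) ((T^^i) (f x)) \<le> e/2"
      using f[of x] f[of y] i(1) xy(3) by auto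
    moreover have "dist ((T^^i) x) ((T^^i) y) \<le> dist ((T^^i) x) ((T^^i) (f x)) + dist ((T^^i) y) ((T^^i) (f x))"
      by (rule dist_triangle2)
    ultimately show False using i(2) by linarith
  qed
  moreover have "f ` E \<subseteq> F" using f by auto
  ultimately have "card E \<le> card F" using F(1) by (meson card_inj_on_le)
  thus ?thesis using F(3) by simp
qed

lemma ssep_le: assumes "finite S" "e > 0" shows "ssep T S e \<le> rspan T S (e/2)"
  unfolding ssep_def
proof (rule cSup_least)
  show "{card E |E. finite E \<and> separated T S e E} \<noteq> {}"
    using sep_zero_in[of T S e] by (metis empty_iff)
  fix x assume "x \<in> {card E |E. finite E \<and> separated T S e E}"
  then obtain E where E: "x = card E" "finite E" "separated T S e E" by blast
  have "card E \<le> rspan T S (e/2)" by (rule sep_card_le[OF assms E(2) E(3)])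
  thus "x \<le> rspan T S (e / 2)" unfolding E(1) .
qed

lemma ssep_ge: assumes "finite S" "e > 0" shows "rspan T S e \<le> ssep T S e"
proof -
  define X where "X = {card E |E. finite E \<and> separated T S e E}"
  have Xne: "X \<noteq> {}" unfolding X_def
    using sep_zero_in[of T S e] by (metis empty_iff)
  have Xb: "X \<subseteq> {..rspan T S (e/2)}"
  proof
    fix x assume "x \<in> X"
    then obtain E where E: "x = card E" "finite E" "separated T S e E" unfolding X_def by blast
    have "card E \<le> rspan T S (e/2)" by (rule sep_card_le[OF assms E(2) E(3)])
    thus "x \<in> {..rspan T S (e/2)}" using E(1) by simp
  qed
  hence Xf: "finite X" using finite_subset[OF Xb] by simp
  have "ssep T S e = Sup X" unfolding ssep_def X_def by (rule refl)
  also have "\<dots> = Max X" by (rule cSup_eq_Max[OF Xf Xne])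
  finally have sM: "ssep T S e = Max X" .
  have "Max X \<in> X" using Max_in[OF Xf Xne] .
  hence "\<exists>E. ssep T S e = card E \<and> finite E \<and> separated T S e E" unfolding X_def sM by (simp only: mem_Collect_eq)
  then obtain E where E: "finite E" "separated T S e E" "card E = ssep T S e" by metis
  have "spanning T S e E"
    unfolding spanning_def
  proof (rule ccontr)
    assume "\<not> (\<forall>x. \<exists>y\<in>E. \<forall>i\<in>S. dist ((T ^^ i) x) ((T ^^ i) y) \<le> e)"
    then obtain x where x: "\<forall>y\<in>E. \<exists>i\<in>S. dist ((T ^^ i) x) ((T ^^ i) y) > e"
      by (auto simp: not_le)
    have "x \<notin> E"
    proof
      assume "x \<in> E"
      then obtain i where "dist ((T^^i) x) ((T^^i) x) > e" using x by blast
      thus False using assms(2) by simp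
    qed
    have "separated T S e (insert x E)" unfolding separated_def
    proof (intro ballI impI)
      fix a b assume a: "a \<in> insert x E" and b: "b \<in> insert x E" and ab: "a \<noteq> b"
      show "\<exists>i\<in>S. dist ((T ^^ i) a) ((T ^^ i) b) > e"
      proof (cases "a = x")
        case True
        then have "b \<in> E" using b ab by auto
        then show ?thesis using x True by blast
      next
        case False
        then have aE: "a \<in> E" using a by auto
        show ?thesis
        proof (cases "b = x")
          case True
          obtain i where i: "i \<in> S" "dist ((T^^i) x) ((T^^i) a) > e" using x aE by blast
          have "dist ((T^^i) a) ((T^^i) x) > e" using i(2) dist_commute[of "(T^^i) x" "(T^^i) a"] by simp
          then show ?thesis using True i(1) by blast
        next
          case False
          then have "b \<in> E" using b by auto
          then show ?thesis using E(2) aE ab unfolding separated_def by blast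
        qed
      qed
    qed
    hence "card (insert x E) \<in> X" unfolding X_def using E(1) by blast
    hence "card (insert x E) \<le> Max X" using Xf by simp
    thus False using \<open>x \<notin> E\<close> E sM by simp
  qed
  from rspan_le[OF E(1) this] E(3) show ?thesis by simp
qed

end




definition Aset :: "nat \<Rightarrow> nat \<Rightarrow> nat set \<Rightarrow> nat set" where
  "Aset m n S = {j. j < n \<and> (\<exists>i\<in>S. i \<le> j \<and> j \<le> i + m)}"

lemma count_j:
  assumes "j < n"
  shows "real (card {S\<in>Pow {..<n}. j \<notin> Aset m n S}) \<le> of_bool (j < m) * 2^n + 2^n / 2^(m+1)"
proof (cases "j < m")
  case True
  have "card {S\<in>Pow {..<n}. j \<notin> Aset m n S} \<le> card (Pow {..<n::nat})"
    by (rule card_mono) auto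
  hence "real (card {S\<in>Pow {..<n}. j \<notin> Aset m n S}) \<le> 2^n" by (simp add: card_Pow)
  then show ?thesis using True by (simp add: add_increasing2)
next
  case False
  have sub: "{S\<in>Pow {..<n}. j \<notin> Aset m n S} \<subseteq> Pow ({..<n} - {j-m..j})"
    using assms False unfolding Aset_def by auto
  have cI: "card {j-m..j} = m+1" using False by simp
  have I: "{j-m..j} \<subseteq> {..<n}" using assms by auto
  have cD: "card ({..<n} - {j-m..j}) = n - (m+1)" using card_Diff_subset[OF _ I] cI by simp
  have "card {S\<in>Pow {..<n}. j \<notin> Aset m n S} \<le> card (Pow ({..<n} - {j-m..j}))"
    by (rule card_mono[OF _ sub]) simp
  also have "\<dots> = 2^(n-(m+1))" by (simp add: card_Pow cD)
  finally have "real (card {S\<in>Pow {..<n}. j \<notin> Aset m n S}) \<le> (2::real)^(n-(m+1))"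
    by (metis of_nat_le_iff of_nat_numeral of_nat_power)
  also have "\<dots> = 2^n / 2^(m+1)" using False assms by (simp add: power_diff)
  finally show ?thesis using False by simp
qed

lemma count:
  "(\<Sum>S\<in>Pow {..<n}. real (card ({..<n} - Aset m n S))) \<le> real m * 2^n + real n * 2^n / 2^(m+1)"
proof -
  have "(\<Sum>S\<in>Pow {..<n}. real (card ({..<n} - Aset m n S)))
      = (\<Sum>S\<in>Pow {..<n}. \<Sum>j<n. of_bool (j \<notin> Aset m n S))"
  proof (rule sum.cong[OF refl])
    fix S
    have "{..<n} \<inter> {j. j \<notin> Aset m n S} = {..<n} - Aset m n S" by auto
    thus "real (card ({..<n} - Aset m n S)) = (\<Sum>j<n. of_bool (j \<notin> Aset m n S))" by simp
  qed
  also have "\<dots> = (\<Sum>j<n. \<Sum>S\<in>Pow {..<n}. of_bool (j \<notin> Aset m n S))" by (rule sum.swap)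
  also have "\<dots> = (\<Sum>j<n. real (card {S\<in>Pow {..<n}. j \<notin> Aset m n S}))"
  proof (rule sum.cong[OF refl])
    fix j
    have "Pow {..<n} \<inter> {S. j \<notin> Aset m n S} = {S\<in>Pow {..<n}. j \<notin> Aset m n S}" by auto
    thus "(\<Sum>S\<in>Pow {..<n}. of_bool (j \<notin> Aset m n S)) = real (card {S\<in>Pow {..<n}. j \<notin> Aset m n S})"
      by simp
  qed
  also have "\<dots> \<le> (\<Sum>j<n. of_bool (j < m) * 2^n + 2^n / 2^(m+1))"
    by (rule sum_mono) (rule count_j, simp)
  also have "\<dots> = real (card ({..<n} \<inter> {j. j < m})) * 2^n + real n * 2^n / 2^(m+1)"
    by (simp add: sum.distrib sum_distrib_right[symmetric])
  also have "\<dots> \<le> real m * 2^n + real n * 2^n / 2^(m+1)"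
  proof -
    have "card ({..<n} \<inter> {j. j < m}) \<le> card {..<m}" by (rule card_mono) auto
    thus ?thesis by simp
  qed
  finally show ?thesis .
qed


context
  fixes T :: "'a::metric_space \<Rightarrow> 'a"
  assumes cpt: "compact (UNIV :: 'a set)" and cont: "continuous_on UNIV T"
begin

lemma key:
  fixes K :: "'a set"
  assumes d: "d > 0" and K1: "finite K" and K2: "K \<noteq> {}" and K3: "\<forall>x. \<exists>k\<in>K. dist x k < (d/2)/2"
     and e1: "e > 0" and e2: "\<forall>u v::'a. dist u v \<le> e \<longrightarrow> (\<forall>k\<le>m. dist ((T^^k) u) ((T^^k) v) \<le> d/2)"
     and S: "S \<subseteq> {..<n}"
  shows "ln (real (rspan T {..<n} d)) \<le> ln (real (rspan T S e))
           + real (card ({..<n} - Aset m n S)) * ln (real (card K))"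
proof -
  have fS: "finite S" using finite_subset[OF S] by simp
  obtain F where F: "finite F" "spanning T S e F" "card F = rspan T S e"
    using rspan_attained'[OF cpt cont fS e1] by blast
  have FA: "\<forall>x. \<exists>y\<in>F. \<forall>j\<in>Aset m n S. dist ((T^^j) x) ((T^^j) y) \<le> d/2"
  proof
    fix x
    obtain y where y: "y \<in> F" "\<forall>i\<in>S. dist ((T^^i) x) ((T^^i) y) \<le> e"
      using F(2) unfolding spanning_def by blast
    have "\<forall>j\<in>Aset m n S. dist ((T^^j) x) ((T^^j) y) \<le> d/2"
    proof
      fix j assume "j \<in> Aset m n S"
      then obtain i where i: "i \<in> S" "i \<le> j" "j \<le> i + m" unfolding Aset_def by blast
      define k where "k = j - i"
      have jk: "j = k + i" and km: "k \<le> m" using i unfolding k_def by auto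
      have "dist ((T^^i) x) ((T^^i) y) \<le> e" using y(2) i(1) by blast
      hence "dist ((T^^k) ((T^^i) x)) ((T^^k) ((T^^i) y)) \<le> d/2"
        using e2 km by blast
      thus "dist ((T^^j) x) ((T^^j) y) \<le> d/2" unfolding jk funpow_add by simp
    qed
    thus "\<exists>y\<in>F. \<forall>j\<in>Aset m n S. dist ((T^^j) x) ((T^^j) y) \<le> d/2" using y(1) by blast
  qed
  define B where "B = {..<n} - Aset m n S"
  have fB: "finite B" unfolding B_def by simp
  obtain G where G: "finite G" "card G \<le> card F * card K ^ card B"
     "\<forall>x. \<exists>z\<in>G. \<forall>j\<in>Aset m n S \<union> B. dist ((T^^j) x) ((T^^j) z) \<le> 2*(d/2)"
    using cells[OF K1 K3 F(1) FA fB] by blast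
  have AU: "Aset m n S \<union> B = {..<n}" unfolding Aset_def B_def by auto
  have "spanning T {..<n} d G" using G(3) unfolding spanning_def AU by simp
  hence "rspan T {..<n} d \<le> card G" using rspan_le G(1) by blast
  hence le: "rspan T {..<n} d \<le> rspan T S e * card K ^ card B" using G(2) F(3) by simp
  have r1: "1 \<le> rspan T {..<n} d" using rspan_ge1'[OF cpt cont _ d] by simp
  have r2: "1 \<le> rspan T S e" using rspan_ge1'[OF cpt cont fS e1] .
  have cK: "0 < card K" using K1 K2 by (simp add: card_gt_0_iff)
  have "ln (real (rspan T {..<n} d)) \<le> ln (real (rspan T S e * card K ^ card B))"
  proof (subst ln_le_cancel_iff)
    show "0 < real (rspan T {..<n} d)" using r1 by simp
    show "0 < real (rspan T S e * card K ^ card B)" using r2 cK by simp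
    show "real (rspan T {..<n} d) \<le> real (rspan T S e * card K ^ card B)" using le by (simp only: of_nat_le_iff)
  qed
  also have "\<dots> = ln (real (rspan T S e)) + real (card B) * ln (real (card K))"
    using r2 cK by (simp add: ln_mult ln_realpow)
  finally show ?thesis unfolding B_def .
qed

lemma avg:
  fixes K :: "'a set"
  assumes d: "d > 0" and K1: "finite K" and K2: "K \<noteq> {}" and K3: "\<forall>x. \<exists>k\<in>K. dist x k < (d/2)/2"
     and e1: "e > 0" and e2: "\<forall>u v::'a. dist u v \<le> e \<longrightarrow> (\<forall>k\<le>m. dist ((T^^k) u) ((T^^k) v) \<le> d/2)"
     and n: "n > 0"
  shows "ln (real (rspan T {..<n} d)) / real n \<le>
      (1 / real n) * (\<Sum>S\<in>Pow {..<n}. 1 / 2 ^ n * ln (real (rspan T S e)))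
      + ln (real (card K)) * (real m / real n + 1 / 2^(m+1))"
proof -
  define B where "B S = real (card ({..<n} - Aset m n S))" for S
  define c where "c = ln (real (card K))"
  define L where "L = ln (real (rspan T {..<n} d))"
  define \<Sigma> where "\<Sigma> = (\<Sum>S\<in>Pow {..<n}. 1 / 2 ^ n * ln (real (rspan T S e)))"
  have cK: "1 \<le> card K" using K1 K2 by (simp add: Suc_le_eq card_gt_0_iff)
  have cpos: "0 \<le> c" unfolding c_def using cK by simp
  have "L = (\<Sum>S\<in>Pow {..<n}. 1/2^n * L)"
    by (simp add: card_Pow)
  also have "\<dots> \<le> (\<Sum>S\<in>Pow {..<n}. 1/2^n * (ln (real (rspan T S e)) + B S * c))"
  proof (rule sum_mono)
    fix S assume "S \<in> Pow {..<n}"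
    hence "S \<subseteq> {..<n}" by simp
    from key[OF d K1 K2 K3 e1 e2 this]
    show "1/2^n * L \<le> 1/2^n * (ln (real (rspan T S e)) + B S * c)"
      unfolding L_def B_def c_def by (intro mult_left_mono) simp_all
  qed
  also have "\<dots> = \<Sigma> + c / 2^n * (\<Sum>S\<in>Pow {..<n}. B S)"
    unfolding \<Sigma>_def by (simp add: sum.distrib sum_distrib_left sum_divide_distrib algebra_simps)
  also have "\<dots> \<le> \<Sigma> + c / 2^n * (real m * 2^n + real n * 2^n / 2^(m+1))"
    using count[of n m] cpos unfolding B_def by (intro add_left_mono mult_left_mono) auto
  also have "c / 2^n * (real m * 2^n + real n * 2^n / 2^(m+1)) = c * (real m + real n / 2^(m+1))"
    by (simp add: field_simps)
  finally have main: "L \<le> \<Sigma> + c * (real m + real n / 2^(m+1))" .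
  hence "L / real n \<le> (\<Sigma> + c * (real m + real n / 2^(m+1))) / real n"
    using n by (intro divide_right_mono) auto
  also have "\<dots> = (1 / real n) * \<Sigma> + c * (real m / real n + 1 / 2^(m+1))"
    using n by (simp add: field_simps)
  finally show ?thesis unfolding L_def \<Sigma>_def c_def .
qed

lemma ln_rspan_mono:
  assumes "finite S'" "S \<subseteq> S'" "0 < e" "e \<le> e'"
  shows "ln (real (rspan T S e')) \<le> ln (real (rspan T S' e))"
proof -
  have fS: "finite S" using finite_subset[OF assms(2,1)] .
  have "rspan T S e' \<le> rspan T S e" using rspan_mono_e[OF cpt cont fS assms(3,4)] .
  also have "\<dots> \<le> rspan T S' e" using rspan_mono_S[OF cpt cont assms(1,3,2)] .
  finally have le: "rspan T S e' \<le> rspan T S' e" .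
  have "1 \<le> rspan T S e'" using rspan_ge1'[OF cpt cont fS] assms by simp
  thus ?thesis using le by (subst ln_le_cancel_iff) auto
qed

lemma Asc_le_h:
  assumes "e > 0"
  shows "Asc (\<lambda>n S. 1 / 2 ^ n) T e \<le> limsup (\<lambda>n. ereal (ln (real (rspan T {..<n} e)) / real n))"
  unfolding Asc_def
proof (intro Limsup_mono always_eventually allI)
  fix n :: nat
  have "(\<Sum>S\<in>Pow {..<n}. 1 / 2 ^ n * ln (real (rspan T S e)))
        \<le> (\<Sum>S\<in>Pow {..<n}. 1 / 2 ^ n * ln (real (rspan T {..<n} e)))"
    by (intro sum_mono mult_left_mono ln_rspan_mono) (use assms in auto)
  also have "\<dots> = ln (real (rspan T {..<n} e))" by (simp add: card_Pow)
  finally have "(1 / real n) * (\<Sum>S\<in>Pow {..<n}. 1 / 2 ^ n * ln (real (rspan T S e)))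
      \<le> (1 / real n) * ln (real (rspan T {..<n} e))" by (intro mult_left_mono) auto
  thus "ereal (1 / real n * (\<Sum>S\<in>Pow {..<n}. 1 / 2 ^ n * ln (real (rspan T S e))))
        \<le> ereal (ln (real (rspan T {..<n} e)) / real n)" by simp
qed

lemma Asc_mono:
  assumes "0 < e" "e \<le> e0"
  shows "Asc (\<lambda>n S. 1 / 2 ^ n) T e0 \<le> Asc (\<lambda>n S. 1 / 2 ^ n) T e"
  unfolding Asc_def
proof (intro Limsup_mono always_eventually allI)
  fix n :: nat
  have "(\<Sum>S\<in>Pow {..<n}. 1 / 2 ^ n * ln (real (rspan T S e0)))
        \<le> (\<Sum>S\<in>Pow {..<n}. 1 / 2 ^ n * ln (real (rspan T S e)))"
    by (intro sum_mono mult_left_mono ln_rspan_mono) (use assms in \<open>auto dest: finite_subset[OF _ finite_lessThan]\<close>)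
  hence "1 / real n * (\<Sum>S\<in>Pow {..<n}. 1 / 2 ^ n * ln (real (rspan T S e0)))
        \<le> 1 / real n * (\<Sum>S\<in>Pow {..<n}. 1 / 2 ^ n * ln (real (rspan T S e)))"
    by (rule mult_left_mono) simp
  thus "ereal (1 / real n * (\<Sum>S\<in>Pow {..<n}. 1 / 2 ^ n * ln (real (rspan T S e0))))
        \<le> ereal (1 / real n * (\<Sum>S\<in>Pow {..<n}. 1 / 2 ^ n * ln (real (rspan T S e))))"
    by (simp only: ereal_less_eq)
qed

lemma Asc_Asc':
  assumes "0 < e"
  shows "Asc (\<lambda>n S. 1 / 2 ^ n) T e \<le> Asc' (\<lambda>n S. 1 / 2 ^ n) T e"
    "Asc' (\<lambda>n S. 1 / 2 ^ n) T e \<le> Asc (\<lambda>n S. 1 / 2 ^ n) T (e/2)"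
proof -
  have r: "ln (real (rspan T S e)) \<le> ln (real (ssep T S e))"
     "ln (real (ssep T S e)) \<le> ln (real (rspan T S (e/2)))" if "finite S" for S
  proof -
    have a: "1 \<le> rspan T S e" using rspan_ge1'[OF cpt cont that assms] .
    have b: "rspan T S e \<le> ssep T S e" using ssep_ge[OF cpt cont that assms] .
    have c: "ssep T S e \<le> rspan T S (e/2)" using ssep_le[OF cpt cont that assms] .
    show "ln (real (rspan T S e)) \<le> ln (real (ssep T S e))"
      using a b by (subst ln_le_cancel_iff) auto
    show "ln (real (ssep T S e)) \<le> ln (real (rspan T S (e/2)))"
      using a b c by (subst ln_le_cancel_iff) auto
  qed
  show "Asc (\<lambda>n S. 1 / 2 ^ n) T e \<le> Asc' (\<lambda>n S. 1 / 2 ^ n) T e"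
    unfolding Asc_def Asc'_def
  proof (intro Limsup_mono always_eventually allI)
    fix n :: nat
    have "(\<Sum>S\<in>Pow {..<n}. 1 / 2 ^ n * ln (real (rspan T S e)))
          \<le> (\<Sum>S\<in>Pow {..<n}. 1 / 2 ^ n * ln (real (ssep T S e)))"
      by (intro sum_mono mult_left_mono r(1)) (auto dest: finite_subset[OF _ finite_lessThan])
    hence "1 / real n * (\<Sum>S\<in>Pow {..<n}. 1 / 2 ^ n * ln (real (rspan T S e)))
          \<le> 1 / real n * (\<Sum>S\<in>Pow {..<n}. 1 / 2 ^ n * ln (real (ssep T S e)))"
      by (rule mult_left_mono) simp
    thus "ereal (1 / real n * (\<Sum>S\<in>Pow {..<n}. 1 / 2 ^ n * ln (real (rspan T S e))))
          \<le> ereal (1 / real n * (\<Sum>S\<in>Pow {..<n}. 1 / 2 ^ n * ln (real (ssep T S e))))"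
      by (simp only: ereal_less_eq)
  qed
  show "Asc' (\<lambda>n S. 1 / 2 ^ n) T e \<le> Asc (\<lambda>n S. 1 / 2 ^ n) T (e/2)"
    unfolding Asc_def Asc'_def
  proof (intro Limsup_mono always_eventually allI)
    fix n :: nat
    have "(\<Sum>S\<in>Pow {..<n}. 1 / 2 ^ n * ln (real (ssep T S e)))
          \<le> (\<Sum>S\<in>Pow {..<n}. 1 / 2 ^ n * ln (real (rspan T S (e/2))))"
      by (intro sum_mono mult_left_mono r(2)) (auto dest: finite_subset[OF _ finite_lessThan])
    hence "1 / real n * (\<Sum>S\<in>Pow {..<n}. 1 / 2 ^ n * ln (real (ssep T S e)))
          \<le> 1 / real n * (\<Sum>S\<in>Pow {..<n}. 1 / 2 ^ n * ln (real (rspan T S (e/2))))"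
      by (rule mult_left_mono) simp
    thus "ereal (1 / real n * (\<Sum>S\<in>Pow {..<n}. 1 / 2 ^ n * ln (real (ssep T S e))))
          \<le> ereal (1 / real n * (\<Sum>S\<in>Pow {..<n}. 1 / 2 ^ n * ln (real (rspan T S (e/2)))))"
      by (simp only: ereal_less_eq)
  qed
qed

lemma lower_step:
  assumes d: "d > 0"
  obtains c :: real where "0 \<le> c" "\<And>m. \<exists>e>0. limsup (\<lambda>n. ereal (ln (real (rspan T {..<n} d)) / real n))
        \<le> Asc (\<lambda>n S. 1 / 2 ^ n) T e + ereal (c / 2^m)"
proof -
  have "(d/2)/2 > 0" using d by simp
  then obtain K :: "'a set" where K1: "finite K" and K2: "K \<noteq> {}" and K3: "\<forall>x. \<exists>k\<in>K. dist x k < (d/2)/2"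
    by (rule cover[OF cpt cont])
  define c where "c = ln (real (card K))"
  have cK: "1 \<le> card K" using K1 K2 by (simp add: Suc_le_eq card_gt_0_iff)
  have cpos: "0 \<le> c" unfolding c_def using cK by simp
  have "\<exists>e>0. limsup (\<lambda>n. ereal (ln (real (rspan T {..<n} d)) / real n))
        \<le> Asc (\<lambda>n S. 1 / 2 ^ n) T e + ereal (c / 2^m)" for m
  proof -
    have "d/2 > 0" using d by simp
    then obtain e where e1: "e > 0" and e2: "\<forall>u v::'a. dist u v \<le> e \<longrightarrow> (\<forall>k\<le>m. dist ((T^^k) u) ((T^^k) v) \<le> d/2)"
      using unif_iter[OF cpt cont, of "d/2" m] by blast
    define a where "a n = (1 / real n) * (\<Sum>S\<in>Pow {..<n}. 1 / 2 ^ n * ln (real (rspan T S e)))" for n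
    have ev: "\<forall>n\<ge>Suc (m * 2^(m+1)). ereal (ln (real (rspan T {..<n} d)) / real n) \<le> ereal (a n) + ereal (c / 2^m)"
    proof (intro allI impI)
      fix n assume nge: "n \<ge> Suc (m * 2^(m+1))"
      hence n: "n > 0" by simp
      have "m * 2^(m+1) \<le> n" using nge by simp
      hence "real (m * 2^(m+1)) \<le> real n" by (simp only: of_nat_le_iff)
      hence "real m * 2^(m+1) \<le> real n" by simp
      hence mn: "real m / real n \<le> 1 / 2^(m+1)" using n by (simp add: field_simps)
      have "ln (real (rspan T {..<n} d)) / real n \<le> a n + c * (real m / real n + 1 / 2^(m+1))"
        using avg[OF d K1 K2 K3 e1 e2 n] unfolding a_def c_def .
      also have "c * (real m / real n + 1 / 2^(m+1)) \<le> c * (1 / 2^(m+1) + 1 / 2^(m+1))"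
        using mn cpos by (intro mult_left_mono) auto
      also have "c * (1 / 2^(m+1) + 1 / 2^(m+1)) = c / 2^m" by (simp add: field_simps)
      finally show "ereal (ln (real (rspan T {..<n} d)) / real n) \<le> ereal (a n) + ereal (c / 2^m)"
        by simp
    qed
    have "limsup (\<lambda>n. ereal (ln (real (rspan T {..<n} d)) / real n))
          \<le> limsup (\<lambda>n. ereal (a n) + ereal (c / 2^m))"
      by (rule Limsup_mono) (use ev in \<open>auto simp: eventually_sequentially\<close>)
    also have "\<dots> = limsup (\<lambda>n. ereal (a n)) + ereal (c / 2^m)"
      by (rule Limsup_add_ereal_right) simp_all
    also have "limsup (\<lambda>n. ereal (a n)) = Asc (\<lambda>n S. 1 / 2 ^ n) T e"
      unfolding Asc_def a_def by simp
    finally show ?thesis using e1 by blast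
  qed
  thus ?thesis using that cpos by blast
qed

lemma lower:
  assumes "a < htop T"
  shows "\<exists>e>0. a < Asc (\<lambda>n S. 1 / 2 ^ n) T e"
proof -
  obtain d where d: "d > 0" and aL: "a < limsup (\<lambda>n. ereal (ln (real (rspan T {..<n} d)) / real n))"
    using assms unfolding htop_def less_SUP_iff by auto
  define L where "L = limsup (\<lambda>n. ereal (ln (real (rspan T {..<n} d)) / real n))"
  obtain c where c0: "0 \<le> c" and cm: "\<And>m. \<exists>e>0. L \<le> Asc (\<lambda>n S. 1 / 2 ^ n) T e + ereal (c / 2^m)"
    using lower_step[OF d] unfolding L_def by blast
  obtain b where b: "a < ereal b" "ereal b < L" using ereal_dense2 aL unfolding L_def by blast
  obtain b' where b': "ereal b < ereal b'" "ereal b' < L" using ereal_dense2[OF b(2)] by blast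
  have bb: "b < b'" using b' by simp
  have "(b' - b) / (c + 1) > 0" using bb c0 by simp
  then obtain m where m: "(1/2::real)^m < (b' - b) / (c + 1)"
    using real_arch_pow_inv[of "(b' - b) / (c + 1)" "1/2"] by auto
  have "c / 2^m \<le> (c + 1) * (1/2)^m" by (simp add: power_one_over field_simps)
  also have "\<dots> < (c + 1) * ((b' - b) / (c + 1))" using m c0 by (intro mult_strict_left_mono) auto
  also have "\<dots> = b' - b" using c0 by simp
  finally have cm2: "c / 2^m < b' - b" .
  obtain e where e: "e > 0" "L \<le> Asc (\<lambda>n S. 1 / 2 ^ n) T e + ereal (c / 2^m)" using cm by blast
  have "ereal b < Asc (\<lambda>n S. 1 / 2 ^ n) T e"
  proof (cases "Asc (\<lambda>n S. 1 / 2 ^ n) T e")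
    case (real x)
    have "L \<le> ereal x + ereal (c / 2^m)" using e(2) real by simp
    with b'(2) have "ereal b' < ereal x + ereal (c / 2^m)" by (rule less_le_trans)
    hence "b' < x + c / 2^m" by simp
    thus ?thesis using real cm2 by simp
  next
    case PInf
    then show ?thesis by simp
  next
    case MInf
    have "L \<le> -\<infinity>" using e(2) MInf by simp
    with b'(2) have "ereal b' < -\<infinity>" by (rule less_le_trans)
    thus ?thesis by simp
  qed
  hence "a < Asc (\<lambda>n S. 1 / 2 ^ n) T e" by (rule less_trans[OF b(1)])
  thus ?thesis using e(1) by blast
qed

lemma upper:
  assumes "e > 0"
  shows "Asc (\<lambda>n S. 1 / 2 ^ n) T e \<le> htop T"
proof -
  have "Asc (\<lambda>n S. 1 / 2 ^ n) T e \<le> limsup (\<lambda>n. ereal (ln (real (rspan T {..<n} e)) / real n))"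
    by (rule Asc_le_h[OF assms])
  also have "\<dots> \<le> htop T" unfolding htop_def using assms by (intro SUP_upper) simp
  finally show ?thesis .
qed

end

theorem corollaryA14:
  fixes T :: "'a::metric_space \<Rightarrow> 'a"
  assumes "compact (UNIV :: 'a set)"
    and "continuous_on UNIV T"
  shows "((\<lambda>\<epsilon>. Asc (\<lambda>n S. 1 / 2 ^ n) T \<epsilon>) \<longlongrightarrow> htop T) (at_right 0)
       \<and> ((\<lambda>\<epsilon>. Asc' (\<lambda>n S. 1 / 2 ^ n) T \<epsilon>) \<longlongrightarrow> htop T) (at_right 0)"
proof
  note U = upper[OF assms] and Lo = lower[OF assms] and M = Asc_mono[OF assms]
    and P1 = Asc_Asc'(1)[OF assms] and P2 = Asc_Asc'(2)[OF assms]
  have low: "\<exists>b>0. \<forall>x>0. x < b \<longrightarrow> a < Asc (\<lambda>n S. 1 / 2 ^ n) T x" if ah: "a < htop T" for a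
  proof -
    obtain e0 where e0: "e0 > 0" "a < Asc (\<lambda>n S. 1 / 2 ^ n) T e0" using Lo[OF ah] by blast
    have "a < Asc (\<lambda>n S. 1 / 2 ^ n) T x" if "0 < x" "x < e0" for x
    proof -
      have "Asc (\<lambda>n S. 1 / 2 ^ n) T e0 \<le> Asc (\<lambda>n S. 1 / 2 ^ n) T x"
        using M[of x e0] that by simp
      with e0(2) show ?thesis by (rule less_le_trans)
    qed
    thus ?thesis using e0(1) by blast
  qed
  show "((\<lambda>\<epsilon>. Asc (\<lambda>n S. 1 / 2 ^ n) T \<epsilon>) \<longlongrightarrow> htop T) (at_right 0)"
  proof (rule order_tendstoI)
    fix a assume "a < htop T"
    from low[OF this] show "\<forall>\<^sub>F x in at_right 0. a < Asc (\<lambda>n S. 1 / 2 ^ n) T x"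
      unfolding eventually_at_right_field .
  next
    fix a assume a: "htop T < a"
    have "Asc (\<lambda>n S. 1 / 2 ^ n) T x < a" if "0 < x" for x
    proof -
      have "Asc (\<lambda>n S. 1 / 2 ^ n) T x \<le> htop T" using U[OF that] .
      from this a show ?thesis by (rule le_less_trans)
    qed
    then show "\<forall>\<^sub>F x in at_right 0. Asc (\<lambda>n S. 1 / 2 ^ n) T x < a"
      unfolding eventually_at_right_field by (intro exI[of _ 1]) simp
  qed
  show "((\<lambda>\<epsilon>. Asc' (\<lambda>n S. 1 / 2 ^ n) T \<epsilon>) \<longlongrightarrow> htop T) (at_right 0)"
  proof (rule order_tendstoI)
    fix a assume "a < htop T"
    then obtain b where b: "b > 0" "\<forall>x>0. x < b \<longrightarrow> a < Asc (\<lambda>n S. 1 / 2 ^ n) T x"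
      using low by blast
    have "a < Asc' (\<lambda>n S. 1 / 2 ^ n) T x" if "0 < x" "x < b" for x
    proof -
      have "a < Asc (\<lambda>n S. 1 / 2 ^ n) T x" using b(2) that by blast
      moreover have "Asc (\<lambda>n S. 1 / 2 ^ n) T x \<le> Asc' (\<lambda>n S. 1 / 2 ^ n) T x" using P1[OF that(1)] .
      ultimately show ?thesis by (rule less_le_trans)
    qed
    then show "\<forall>\<^sub>F x in at_right 0. a < Asc' (\<lambda>n S. 1 / 2 ^ n) T x"
      unfolding eventually_at_right_field using b(1) by blast
  next
    fix a assume a: "htop T < a"
    have "Asc' (\<lambda>n S. 1 / 2 ^ n) T x < a" if "0 < x" for x
    proof -
      have "Asc' (\<lambda>n S. 1 / 2 ^ n) T x \<le> Asc (\<lambda>n S. 1 / 2 ^ n) T (x/2)" using P2[OF that] .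
      also have "\<dots> \<le> htop T" using U[of "x/2"] that by simp
      finally show ?thesis using a by simp
    qed
    then show "\<forall>\<^sub>F x in at_right 0. Asc' (\<lambda>n S. 1 / 2 ^ n) T x < a"
      unfolding eventually_at_right_field by (intro exI[of _ 1]) simp
  qed
qed

end
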